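(* Let $\Gamma$ be a single-player extensive-form game and let $\mathscr C$ be the class of all single-player games sharing the same game tree and infoset partition as $\Gamma$ (with arbitrary nonnegative utilities). Then $$\mathrm{VoR}^{\mathrm{opt}}(\mathscr C)\le \max_{z\in\mathcal Z,\,h\in\mathcal H_c}\frac{\beta(h)}{\alpha(z)}.$$
   Context: An extensive-form game consists of a finite rooted tree with node set $\mathcal H$, leaves $\mathcal Z$, actions $A_h$ at nonterminal $h$; nonterminal nodes belong either to the single player (Player 1) or to chance; $\mathcal H_c$ is the set of chance nodes, each with a fixed distribution $\mathbb P_c(\cdot\mid h)$ on $A_h$. Player 1 has utility $u_1:\mathcal Z\to\mathbb R_{\ge0}$ and a partition $\mathcal I_1$ of its nodes into infosets, with a common action set $A_I$ for all nodes of an infoset $I$. The game tree is $\mathcal H$ with its actions and chance distributions. For a node $h$ at depth $d$, let $(h_0,\dots,h_{d-1})$ be the root-to-$h$ path (excluding $h$) and $\mathrm{obs}(h)=(i_k,I_k,a_k)_{k=0}^{d-1}$ with $i_k$ the player (1 or chance) at $h_k$, $I_k$ the infoset of $h_k$ (for player nodes), $a_k$ the action taken at $h_k$. A behavioral strategy $\pi$ assigns $\pi(\cdot\mid I)\in\Delta(A_I)$ to each $I$; $\mathbb P(z\mid\pi)$ is the reach probability of $z$; $U_1(\pi)=\sum_z\mathbb P(z\mid\pi)u_1(z)$; $u_1(\mathrm{opt}(\Gamma))=\max_\pi U_1(\pi)$. $\mathrm{pr}_1(\Gamma)$ has the same tree and utilities, with each $I\in\mathcal I_1$ partitioned by $h\sim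 h'\iff\mathrm{obs}_1(h)=\mathrm{obs}_1(h')$, where $\mathrm{obs}_1$ is the subsequence of $\mathrm{obs}$ with $i_k=1$. $\mathrm{VoR}^{\mathrm{opt}}(\Gamma)=u_1(\mathrm{opt}(\mathrm{pr}_1(\Gamma)))/u_1(\mathrm{opt}(\Gamma))$, and $\mathrm{VoR}^{\mathrm{opt}}(\mathscr C)=\sup_{\Gamma\in\mathscr C}\mathrm{VoR}^{\mathrm{opt}}(\Gamma)$. Absentmindedness coefficient: for $z\in\mathcal Z$, $I\in\mathcal I_1$ and $a\in A_I$, let $n_z(I)=|\{k:I_k=I\}|$, $n_z(a)=|\{k:I_k=I,a_k=a\}|$, $p_z(a)=n_z(a)/n_z(I)$, and $\alpha(z)=\prod_{I\in\mathcal I_1:n_z(I)>1}\ \prod_{a\in A_I:n_z(a)>0}p_z(a)^{n_z(a)}\in(0,1]$. Branching factor: for a chance node $h$ and $a\in A_h$, let $H_{ha}$ be the set of chance nodes in the subtree rooted at the child of $h$ reached by $a$; set $b_h(a)=1$ if $H_{ha}=\emptyset$ and $b_h(a)=\max_{h'\in H_{ha}}\beta(h')$ otherwise, and $\beta(h)=\sum_{a\in A_h}b_h(a)$ (defined recursively bottom-up). By convention, $\max_{h\in\mathcal H_c}\beta(h)=1$ if $\mathcal H_c=\emptyset$. *)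

theory Defs
  imports Complex_Main "HOL-Library.Extended_Real"
begin

text \<open>
Game trees: nodes are action histories (lists of actions), the node set H is a
finite prefix-closed set of lists containing the root [].
\<close>

definition acts :: "'a list set \<Rightarrow> 'a list \<Rightarrow> 'a set" where
  "acts H h = {a. h @ [a] \<in> H}"

definition leaves :: "'a list set \<Rightarrow> 'a list set" where
  "leaves H = {h \<in> H. acts H h = {}}"

definition pnodes :: "'a list set \<Rightarrow> 'a list set \<Rightarrow> 'a list set" where
  "pnodes H Hc = {h \<in> H. acts H h \<noteq> {}} - Hc"

definition wf_game :: "'a list set \<Rightarrow> 'a list set \<Rightarrow> ('a list \<Rightarrow> 'a \<Rightarrow> real)
    \<Rightarrow> ('a list \<Rightarrow> 'i) \<Rightarrow> bool" where
  "wf_game H Hc Pc infs \<longleftrightarrow>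
     finite H \<and> [] \<in> H \<and> (\<forall>h a. h @ [a] \<in> H \<longrightarrow> h \<in> H) \<and>
     Hc \<subseteq> H - leaves H \<and>
     (\<forall>h\<in>Hc. (\<forall>a\<in>acts H h. Pc h a \<ge> 0) \<and> (\<Sum>a\<in>acts H h. Pc h a) = 1) \<and>
     (\<forall>h\<in>pnodes H Hc. \<forall>h'\<in>pnodes H Hc. infs h = infs h' \<longrightarrow> acts H h = acts H h')"

definition valid_strat :: "'a list set \<Rightarrow> 'a list set \<Rightarrow> ('a list \<Rightarrow> 'j)
    \<Rightarrow> ('j \<Rightarrow> 'a \<Rightarrow> real) \<Rightarrow> bool" where
  "valid_strat H Hc infs \<pi> \<longleftrightarrow>
     (\<forall>h\<in>pnodes H Hc. (\<forall>a\<in>acts H h. \<pi> (infs h) a \<ge> 0) \<and> (\<Sum>a\<in>acts H h. \<pi> (infs h) a) = 1)"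

definition reach :: "'a list set \<Rightarrow> ('a list \<Rightarrow> 'a \<Rightarrow> real) \<Rightarrow> ('a list \<Rightarrow> 'j)
    \<Rightarrow> ('j \<Rightarrow> 'a \<Rightarrow> real) \<Rightarrow> 'a list \<Rightarrow> real" where
  "reach Hc Pc infs \<pi> z =
     (\<Prod>k<length z. if take k z \<in> Hc then Pc (take k z) (z ! k) else \<pi> (infs (take k z)) (z ! k))"

definition util :: "'a list set \<Rightarrow> 'a list set \<Rightarrow> ('a list \<Rightarrow> 'a \<Rightarrow> real) \<Rightarrow> ('a list \<Rightarrow> 'j)
    \<Rightarrow> ('a list \<Rightarrow> real) \<Rightarrow> ('j \<Rightarrow> 'a \<Rightarrow> real) \<Rightarrow> real" where
  "util H Hc Pc infs u \<pi> = (\<Sum>z\<in>leaves H. reach Hc Pc infs \<pi> z * u z)"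

text \<open>Optimal value u_1(opt(Gamma)) (a maximum; written as a supremum).\<close>
definition opt_val :: "'a list set \<Rightarrow> 'a list set \<Rightarrow> ('a list \<Rightarrow> 'a \<Rightarrow> real) \<Rightarrow> ('a list \<Rightarrow> 'j)
    \<Rightarrow> ('a list \<Rightarrow> real) \<Rightarrow> real" where
  "opt_val H Hc Pc infs u = Sup (util H Hc Pc infs u ` {\<pi>. valid_strat H Hc infs \<pi>})"

definition obs1 :: "'a list set \<Rightarrow> 'a list set \<Rightarrow> ('a list \<Rightarrow> 'i) \<Rightarrow> 'a list \<Rightarrow> ('i \<times> 'a) list" where
  "obs1 H Hc infs h =
     map (\<lambda>k. (infs (take k h), h ! k)) (filter (\<lambda>k. take k h \<in> pnodes H Hc) [0..<length h])"

text \<open>Infoset labelling of pr_1(Gamma): h ~ h' iff same infoset and same obs_1.\<close>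
definition pr_inf :: "'a list set \<Rightarrow> 'a list set \<Rightarrow> ('a list \<Rightarrow> 'i) \<Rightarrow> 'a list \<Rightarrow> 'i \<times> ('i \<times> 'a) list" where
  "pr_inf H Hc infs h = (infs h, obs1 H Hc infs h)"

definition VoR_opt :: "'a list set \<Rightarrow> 'a list set \<Rightarrow> ('a list \<Rightarrow> 'a \<Rightarrow> real) \<Rightarrow> ('a list \<Rightarrow> 'i)
    \<Rightarrow> ('a list \<Rightarrow> real) \<Rightarrow> real" where
  "VoR_opt H Hc Pc infs u = opt_val H Hc Pc (pr_inf H Hc infs) u / opt_val H Hc Pc infs u"

definition n_I :: "'a list set \<Rightarrow> 'a list set \<Rightarrow> ('a list \<Rightarrow> 'i) \<Rightarrow> 'a list \<Rightarrow> 'i \<Rightarrow> nat" where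
  "n_I H Hc infs z I = card {k. k < length z \<and> take k z \<in> pnodes H Hc \<and> infs (take k z) = I}"

definition n_a :: "'a list set \<Rightarrow> 'a list set \<Rightarrow> ('a list \<Rightarrow> 'i) \<Rightarrow> 'a list \<Rightarrow> 'i \<Rightarrow> 'a \<Rightarrow> nat" where
  "n_a H Hc infs z I a =
     card {k. k < length z \<and> take k z \<in> pnodes H Hc \<and> infs (take k z) = I \<and> z ! k = a}"

definition alpha :: "'a list set \<Rightarrow> 'a list set \<Rightarrow> ('a list \<Rightarrow> 'i) \<Rightarrow> 'a list \<Rightarrow> real" where
  "alpha H Hc infs z =
     (\<Prod>I\<in>{I. (\<exists>k<length z. take k z \<in> pnodes H Hc \<and> infs (take k z) = I) \<and> 1 < n_I H Hc infs z I}.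
       \<Prod>a\<in>{z ! k |k. k < length z \<and> take k z \<in> pnodes H Hc \<and> infs (take k z) = I}.
         (real (n_a H Hc infs z I a) / real (n_I H Hc infs z I)) ^ n_a H Hc infs z I a)"

text \<open>Branching factor, by bottom-up recursion (with a fuel argument bounding the
  recursion depth; fuel card H always suffices since histories in H have length < card H).\<close>
fun beta_fuel :: "nat \<Rightarrow> 'a list set \<Rightarrow> 'a list set \<Rightarrow> 'a list \<Rightarrow> nat" where
  "beta_fuel 0 H Hc h = 0"
| "beta_fuel (Suc n) H Hc h =
     (\<Sum>a\<in>acts H h.
        (let S = {h' \<in> Hc. (\<exists>t. h' = h @ [a] @ t)} in
         if S = {} then 1 else Max (beta_fuel n H Hc ` S)))"

definition beta :: "'a list set \<Rightarrow> 'a list set \<Rightarrow> 'a list \<Rightarrow> nat" where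
  "beta H Hc h = beta_fuel (card H) H Hc h"

definition beta_max :: "'a list set \<Rightarrow> 'a list set \<Rightarrow> real" where
  "beta_max H Hc = (if Hc = {} then 1 else real (Max (beta H Hc ` Hc)))"

definition VoR_bound :: "'a list set \<Rightarrow> 'a list set \<Rightarrow> ('a list \<Rightarrow> 'i) \<Rightarrow> real" where
  "VoR_bound H Hc infs = Max ((\<lambda>z. beta_max H Hc / alpha H Hc infs z) ` leaves H)"

end

theory Submission
  imports Defs
begin

definition Lv :: "'a list set \<Rightarrow> 'a list \<Rightarrow> 'a list set" where
  "Lv H h = {z \<in> leaves H. \<exists>t. z = h @ t}"
definition Cn :: "'a list set \<Rightarrow> 'a list \<Rightarrow> 'a list set" where
  "Cn Hc h = {h' \<in> Hc. \<exists>t. h' = h @ t}"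
definition Bn :: "nat \<Rightarrow> 'a list set \<Rightarrow> 'a list set \<Rightarrow> 'a list \<Rightarrow> nat" where
  "Bn n H Hc h = (if Cn Hc h = {} then 1 else Max (beta_fuel n H Hc ` Cn Hc h))"
definition pl :: "'a list set \<Rightarrow> ('a list \<Rightarrow> 'j) \<Rightarrow> ('j \<Rightarrow> 'a \<Rightarrow> real) \<Rightarrow> 'a list \<Rightarrow> nat \<Rightarrow> real" where
  "pl Hc lab \<pi> z i = (\<Prod>k\<in>{i..<length z}. if take k z \<in> Hc then 1 else \<pi> (lab (take k z)) (z ! k))"
definition pcw :: "'a list set \<Rightarrow> ('a list \<Rightarrow> 'a \<Rightarrow> real) \<Rightarrow> 'a list \<Rightarrow> real" where
  "pcw Hc Pc z = (\<Prod>k<length z. if take k z \<in> Hc then Pc (take k z) (z ! k) else 1)"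
definition Sx :: "'a list set \<Rightarrow> 'a list set \<Rightarrow> ('a list \<Rightarrow> 'j) \<Rightarrow> ('j \<Rightarrow> 'a \<Rightarrow> real) \<Rightarrow> 'a list \<Rightarrow> real" where
  "Sx H Hc lab \<pi> h = (\<Sum>z\<in>Lv H h. pl Hc lab \<pi> z (length h))"
definition hgt_ok :: "'a list set \<Rightarrow> 'a list \<Rightarrow> nat \<Rightarrow> bool" where
  "hgt_ok H h n = (\<forall>z\<in>H. (\<exists>t. z = h @ t) \<longrightarrow> length z < length h + n)"

lemma wf_finite: "wf_game H Hc Pc infs \<Longrightarrow> finite H"
  by (simp add: wf_game_def)
lemma wf_root: "wf_game H Hc Pc infs \<Longrightarrow> [] \<in> H"
  by (simp add: wf_game_def)
lemma wf_Hc: "wf_game H Hc Pc infs \<Longrightarrow> Hc \<subseteq> H - leaves H"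
  by (simp add: wf_game_def)
lemma wf_finite_Hc: "wf_game H Hc Pc infs \<Longrightarrow> finite Hc"
  using wf_Hc wf_finite by (metis Diff_subset finite_subset)

lemma prefix_closed: "wf_game H Hc Pc infs \<Longrightarrow> h @ t \<in> H \<Longrightarrow> h \<in> H"
proof (induction t arbitrary: h)
  case Nil then show ?case by simp
next
  case (Cons a t)
  then have "h @ [a] \<in> H" by (metis append_Cons append_Nil append_assoc)
  then show ?case using Cons.prems(1) unfolding wf_game_def by blast
qed

lemma finite_acts: "finite H \<Longrightarrow> finite (acts H h)"
proof -
  assume "finite H"
  have "acts H h = (\<lambda>a. h @ [a]) -` H" unfolding acts_def by auto
  moreover have "inj (\<lambda>a. h @ [a])" by (simp add: inj_def)
  ultimately show ?thesis using \<open>finite H\<close> finite_vimageI by metis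
qed

lemma take_acts:
  assumes "wf_game H Hc Pc infs" "z \<in> H" "k < length z"
  shows "take k z \<in> H" "z ! k \<in> acts H (take k z)" "take k z \<notin> leaves H"
proof -
  have "take (Suc k) z \<in> H" using assms prefix_closed[of H Hc Pc infs "take (Suc k) z" "drop (Suc k) z"] by simp
  then have "take k z @ [z ! k] \<in> H" using assms(3) take_Suc_conv_app_nth by metis
  then show "take k z \<in> H" "z ! k \<in> acts H (take k z)" "take k z \<notin> leaves H"
    using assms(1) prefix_closed by (auto simp: acts_def leaves_def)
qed

lemma take_pnodes:
  assumes "wf_game H Hc Pc infs" "z \<in> H" "k < length z"
  shows "take k z \<in> pnodes H Hc \<longleftrightarrow> take k z \<notin> Hc"
  using take_acts[OF assms] unfolding pnodes_def leaves_def by auto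

lemma ext_leaf:
  assumes "wf_game H Hc Pc infs" "h \<in> leaves H" "h @ t \<in> H"
  shows "t = []"
proof (cases t)
  case Nil then show ?thesis .
next
  case (Cons a t')
  then have "(h @ [a]) @ t' \<in> H" using assms(3) by simp
  then have "h @ [a] \<in> H" using assms(1) prefix_closed by blast
  then show ?thesis using assms(2) by (auto simp: leaves_def acts_def)
qed

lemma Lv_leaf:
  assumes "wf_game H Hc Pc infs" "h \<in> leaves H"
  shows "Lv H h = {h}"
  using ext_leaf[OF assms] assms(2) unfolding Lv_def leaves_def by auto

lemma Cn_leaf:
  assumes "wf_game H Hc Pc infs" "h \<in> leaves H"
  shows "Cn Hc h = {}"
proof -
  have "h' \<notin> Hc" if "h' = h @ t" for h' t
  proof
    assume "h' \<in> Hc"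
    then have "h @ t \<in> H" using that wf_Hc[OF assms(1)] by auto
    then have "t = []" using ext_leaf[OF assms] by blast
    then show False using \<open>h' \<in> Hc\<close> that assms(2) wf_Hc[OF assms(1)] by auto
  qed
  then show ?thesis unfolding Cn_def by auto
qed

lemma Lv_split:
  assumes "wf_game H Hc Pc infs" "h \<in> H" "h \<notin> leaves H"
  shows "Lv H h = (\<Union>a\<in>acts H h. Lv H (h @ [a]))"
proof
  show "Lv H h \<subseteq> (\<Union>a\<in>acts H h. Lv H (h @ [a]))"
  proof
    fix z assume z: "z \<in> Lv H h"
    then obtain t where t: "z = h @ t" "z \<in> leaves H" unfolding Lv_def by auto
    have "t \<noteq> []" using t assms(3) by auto
    then obtain a t' where at: "t = a # t'" by (cases t) auto
    have "(h @ [a]) @ t' \<in> H" using t at by (simp add: leaves_def)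
    then have "h @ [a] \<in> H" using assms(1) prefix_closed by blast
    then show "z \<in> (\<Union>a\<in>acts H h. Lv H (h @ [a]))" using t at
      by (auto simp: acts_def Lv_def)
  qed
next
  show "(\<Union>a\<in>acts H h. Lv H (h @ [a])) \<subseteq> Lv H h" unfolding Lv_def by auto
qed

lemma pl_step:
  assumes "z = h @ [a] @ t"
  shows "pl Hc lab \<pi> z (length h) = (if h \<in> Hc then 1 else \<pi> (lab h) a) * pl Hc lab \<pi> z (Suc (length h))"
proof -
  have "length h < length z" using assms by simp
  then have "pl Hc lab \<pi> z (length h) = (if take (length h) z \<in> Hc then 1 else \<pi> (lab (take (length h) z)) (z ! length h)) * pl Hc lab \<pi> z (Suc (length h))"
    unfolding pl_def by (rule prod.atLeast_Suc_lessThan)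
  then show ?thesis using assms by simp
qed

lemma Sx_split:
  assumes "wf_game H Hc Pc infs" "h \<in> H" "h \<notin> leaves H"
  shows "Sx H Hc lab \<pi> h = (\<Sum>a\<in>acts H h. (if h \<in> Hc then 1 else \<pi> (lab h) a) * Sx H Hc lab \<pi> (h @ [a]))"
proof -
  have fin: "finite H" using assms(1) wf_finite by blast
  have finLv: "\<And>x. finite (Lv H x)" using fin by (rule finite_subset[rotated]) (auto simp: Lv_def leaves_def)
  have "Sx H Hc lab \<pi> h = (\<Sum>a\<in>acts H h. \<Sum>z\<in>Lv H (h @ [a]). pl Hc lab \<pi> z (length h))"
    unfolding Sx_def Lv_split[OF assms]
    by (rule sum.UNION_disjoint) (simp_all add: finite_acts fin finLv, auto simp: Lv_def)
  also have "\<dots> = (\<Sum>a\<in>acts H h. \<Sum>z\<in>Lv H (h @ [a]). (if h \<in> Hc then 1 else \<pi> (lab h) a) * pl Hc lab \<pi> z (Suc (length h)))"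
  proof (intro sum.cong refl)
    fix a z assume "z \<in> Lv H (h @ [a])"
    then obtain t where "z = h @ [a] @ t" unfolding Lv_def by auto
    then show "pl Hc lab \<pi> z (length h) = (if h \<in> Hc then 1 else \<pi> (lab h) a) * pl Hc lab \<pi> z (Suc (length h))"
      by (rule pl_step)
  qed
  also have "\<dots> = (\<Sum>a\<in>acts H h. (if h \<in> Hc then 1 else \<pi> (lab h) a) * Sx H Hc lab \<pi> (h @ [a]))"
    by (simp add: Sx_def sum_distrib_left)
  finally show ?thesis .
qed

definition bterm :: "('a list \<Rightarrow> nat) \<Rightarrow> 'a list set \<Rightarrow> 'a list \<Rightarrow> 'a \<Rightarrow> nat" where
  "bterm f Hc h a = (let S = {h' \<in> Hc. \<exists>t. h' = h @ [a] @ t} in if S = {} then 1 else Max (f ` S))"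

lemma bf_Suc: "beta_fuel (Suc n) H Hc h = (\<Sum>a\<in>acts H h. bterm (beta_fuel n H Hc) Hc h a)"
  by (simp add: bterm_def)

lemma bterm_mono:
  assumes "finite Hc" "\<And>x. f x \<le> g x"
  shows "bterm f Hc h a \<le> bterm g Hc h a"
proof (cases "{h' \<in> Hc. \<exists>t. h' = h @ [a] @ t} = {}")
  case True then show ?thesis by (simp add: bterm_def)
next
  case False
  let ?S = "{h' \<in> Hc. \<exists>t. h' = h @ [a] @ t}"
  have fS: "finite ?S" using assms by simp
  have "Max (f ` ?S) \<le> Max (g ` ?S)"
  proof (rule Max.boundedI)
    show "finite (f ` ?S)" using fS by simp
    show "f ` ?S \<noteq> {}" using False by simp
    fix x assume "x \<in> f ` ?S"
    then obtain y where y: "y \<in> ?S" "x = f y" by blast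
    have "x \<le> g y" using assms y by simp
    also have "\<dots> \<le> Max (g ` ?S)" using fS y by (intro Max_ge) auto
    finally show "x \<le> Max (g ` ?S)" .
  qed
  then show ?thesis unfolding bterm_def Let_def by (simp only: if_not_P[OF False])
qed

lemma beta_mono:
  assumes "finite Hc"
  shows "beta_fuel n H Hc h \<le> beta_fuel (Suc n) H Hc h"
proof (induction n arbitrary: h)
  case 0 then show ?case by simp
next
  case (Suc n)
  have "sum (bterm (beta_fuel n H Hc) Hc h) (acts H h) \<le> sum (bterm (beta_fuel (Suc n) H Hc) Hc h) (acts H h)"
    by (intro sum_mono bterm_mono assms Suc.IH)
  then show ?case by (simp only: bf_Suc[of n H Hc h] bf_Suc[of "Suc n" H Hc h])
qed

lemma beta_mono_le:
  assumes "finite Hc" "n \<le> m"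
  shows "beta_fuel n H Hc h \<le> beta_fuel m H Hc h"
  using assms(2)
proof (induction m)
  case 0 then show ?case by simp
next
  case (Suc m)
  then show ?case using beta_mono[OF assms(1), of m H h] le_Suc_eq by fastforce
qed

lemma beta_ge1:
  assumes wf: "wf_game H Hc Pc infs"
  shows "h \<in> Hc \<Longrightarrow> hgt_ok H h n \<Longrightarrow> 1 \<le> beta_fuel n H Hc h"
proof (induction n arbitrary: h)
  case 0
  then have "h \<in> H" using wf_Hc[OF wf] by auto
  then show ?case using 0 unfolding hgt_ok_def by fastforce
next
  case (Suc n)
  have hH: "h \<in> H" "h \<notin> leaves H" using Suc.prems wf_Hc[OF wf] by auto
  then obtain a where a: "a \<in> acts H h" unfolding leaves_def by auto
  have fin: "finite (acts H h)" using finite_acts wf_finite[OF wf] by blast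
  let ?f = "bterm (beta_fuel n H Hc) Hc h"
  have "1 \<le> ?f a"
  proof (cases "{h' \<in> Hc. \<exists>t. h' = h @ [a] @ t} = {}")
    case True then show ?thesis by (simp add: Let_def bterm_def)
  next
    case False
    then obtain h' t where h': "h' \<in> Hc" "h' = h @ [a] @ t" by auto
    have "hgt_ok H h' n" using Suc.prems(2) h' unfolding hgt_ok_def by fastforce
    then have "1 \<le> beta_fuel n H Hc h'" using Suc.IH h' by blast
    also have "\<dots> \<le> Max (beta_fuel n H Hc ` {h' \<in> Hc. \<exists>t. h' = h @ [a] @ t})"
      using h' wf_finite_Hc[OF wf] by (intro Max_ge) auto
    finally show ?thesis using False by (simp add: Let_def bterm_def)
  qed
  also have "\<dots> \<le> (\<Sum>a\<in>acts H h. ?f a)" using a fin by (intro member_le_sum) auto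
  finally show ?case by (simp only: bf_Suc[of n H Hc h])
qed

lemma Bn_child:
  assumes wf: "wf_game H Hc Pc infs" and hH: "h \<in> H" and a: "a \<in> acts H h" and ok: "hgt_ok H h (Suc n)"
  shows "Bn n H Hc (h @ [a]) \<le> Bn (Suc n) H Hc h"
proof -
  have finC: "finite (Cn Hc x)" for x using wf_finite_Hc[OF wf] unfolding Cn_def by simp
  have sub: "Cn Hc (h @ [a]) \<subseteq> Cn Hc h" unfolding Cn_def by auto
  have ge1: "1 \<le> Bn (Suc n) H Hc h"
  proof (cases "Cn Hc h = {}")
    case False
    then obtain c where c: "c \<in> Cn Hc h" by auto
    then obtain t where ct: "c \<in> Hc" "c = h @ t" unfolding Cn_def by auto
    have "hgt_ok H c (Suc n)" using ok ct unfolding hgt_ok_def by fastforce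
    then have "1 \<le> beta_fuel (Suc n) H Hc c" using beta_ge1[OF wf] ct by blast
    also have "\<dots> \<le> Max (beta_fuel (Suc n) H Hc ` Cn Hc h)" using c finC by (intro Max_ge) auto
    finally show ?thesis using False by (simp add: Bn_def)
  qed (simp add: Bn_def)
  show ?thesis
  proof (cases "Cn Hc (h @ [a]) = {}")
    case True then show ?thesis using ge1 by (simp add: Bn_def)
  next
    case False
    then have F2: "Cn Hc h \<noteq> {}" using sub by auto
    have "Max (beta_fuel n H Hc ` Cn Hc (h @ [a])) \<le> Max (beta_fuel (Suc n) H Hc ` Cn Hc h)"
    proof (rule Max.boundedI)
      show "finite (beta_fuel n H Hc ` Cn Hc (h @ [a]))" using finC by simp
      show "beta_fuel n H Hc ` Cn Hc (h @ [a]) \<noteq> {}" using False by simp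
      fix x assume "x \<in> beta_fuel n H Hc ` Cn Hc (h @ [a])"
      then obtain y where y: "y \<in> Cn Hc (h @ [a])" "x = beta_fuel n H Hc y" by blast
      have "x \<le> beta_fuel (Suc n) H Hc y" using beta_mono[OF wf_finite_Hc[OF wf]] y by simp
      also have "\<dots> \<le> Max (beta_fuel (Suc n) H Hc ` Cn Hc h)" using finC y sub by (intro Max_ge) auto
      finally show "x \<le> Max (beta_fuel (Suc n) H Hc ` Cn Hc h)" .
    qed
    then show ?thesis using False F2 by (simp add: Bn_def)
  qed
qed

lemma Sx_bound:
  assumes wf: "wf_game H Hc Pc infs" and vs: "valid_strat H Hc lab \<pi>"
  shows "h \<in> H \<Longrightarrow> hgt_ok H h n \<Longrightarrow> Sx H Hc lab \<pi> h \<le> real (Bn n H Hc h)"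
proof (induction n arbitrary: h)
  case 0
  then show ?case unfolding hgt_ok_def by fastforce
next
  case (Suc n)
  show ?case
  proof (cases "h \<in> leaves H")
    case True
    then show ?thesis using Lv_leaf[OF wf True] Cn_leaf[OF wf True]
      by (simp add: Sx_def pl_def Bn_def)
  next
    case nl: False
    have fin: "finite (acts H h)" using finite_acts wf_finite[OF wf] by blast
    have child: "h @ [a] \<in> H" "hgt_ok H (h @ [a]) n" if "a \<in> acts H h" for a
      using that Suc.prems(2) unfolding acts_def hgt_ok_def by fastforce+
    have IH: "Sx H Hc lab \<pi> (h @ [a]) \<le> real (Bn n H Hc (h @ [a]))" if "a \<in> acts H h" for a
      using Suc.IH child[OF that] by blast
    have split: "Sx H Hc lab \<pi> h = (\<Sum>a\<in>acts H h. (if h \<in> Hc then 1 else \<pi> (lab h) a) * Sx H Hc lab \<pi> (h @ [a]))"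
      using Sx_split[OF wf Suc.prems(1) nl] .
    show ?thesis
    proof (cases "h \<in> Hc")
      case True
      have "Sx H Hc lab \<pi> h = (\<Sum>a\<in>acts H h. Sx H Hc lab \<pi> (h @ [a]))" using split True by simp
      also have "\<dots> \<le> (\<Sum>a\<in>acts H h. real (Bn n H Hc (h @ [a])))" using IH by (intro sum_mono) auto
      also have "\<dots> = real (beta_fuel (Suc n) H Hc h)"
      proof -
        have e: "Cn Hc (h @ [a]) = {h' \<in> Hc. \<exists>t. h' = h @ [a] @ t}" for a unfolding Cn_def by simp
        show ?thesis unfolding Bn_def e bf_Suc[of n H Hc h] bterm_def Let_def of_nat_sum by simp
      qed
      also have "\<dots> \<le> real (Bn (Suc n) H Hc h)"
      proof -
        have "h \<in> Cn Hc h" using True unfolding Cn_def by auto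
        moreover have "finite (Cn Hc h)" using wf_finite_Hc[OF wf] unfolding Cn_def by simp
        ultimately have "beta_fuel (Suc n) H Hc h \<le> Max (beta_fuel (Suc n) H Hc ` Cn Hc h)"
          by (metis Max_ge finite_imageI imageI)
        moreover have "Cn Hc h \<noteq> {}" using \<open>h \<in> Cn Hc h\<close> by auto
        ultimately show ?thesis unfolding Bn_def by (simp only: if_False of_nat_le_iff)
      qed
      finally show ?thesis .
    next
      case False
      then have pn: "h \<in> pnodes H Hc" using Suc.prems(1) nl unfolding pnodes_def leaves_def by auto
      have pos: "\<forall>a\<in>acts H h. 0 \<le> \<pi> (lab h) a" and s1: "(\<Sum>a\<in>acts H h. \<pi> (lab h) a) = 1"
        using vs pn unfolding valid_strat_def by auto
      have "Sx H Hc lab \<pi> h = (\<Sum>a\<in>acts H h. \<pi> (lab h) a * Sx H Hc lab \<pi> (h @ [a]))" using split False by simp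
      also have "\<dots> \<le> (\<Sum>a\<in>acts H h. \<pi> (lab h) a * real (Bn (Suc n) H Hc h))"
      proof (intro sum_mono mult_left_mono)
        fix a assume a: "a \<in> acts H h"
        show "0 \<le> \<pi> (lab h) a" using pos a by auto
        have "Sx H Hc lab \<pi> (h @ [a]) \<le> real (Bn n H Hc (h @ [a]))" using IH a .
        also have "\<dots> \<le> real (Bn (Suc n) H Hc h)" using Bn_child[OF wf Suc.prems(1) a Suc.prems(2)] by simp
        finally show "Sx H Hc lab \<pi> (h @ [a]) \<le> real (Bn (Suc n) H Hc h)" .
      qed
      also have "\<dots> = real (Bn (Suc n) H Hc h)" using s1 by (simp add: sum_distrib_right[symmetric])
      finally show ?thesis .
    qed
  qed
qed

lemma len_lt_card:
  assumes wf: "wf_game H Hc Pc infs" and z: "z \<in> H"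
  shows "length z < card H"
proof -
  have "(\<lambda>i. take i z) ` {0..length z} \<subseteq> H"
    using z prefix_closed[OF wf] by (auto, metis append_take_drop_id)
  moreover have "inj_on (\<lambda>i. take i z) {0..length z}"
    by (rule inj_onI) (metis atLeastAtMost_iff length_take min.absorb2)
  ultimately have "card {0..length z} \<le> card H"
    using wf_finite[OF wf] by (metis card_image card_mono)
  then show ?thesis by simp
qed

lemma root_facts:
  assumes wf: "wf_game H Hc Pc infs"
  shows "hgt_ok H [] (card H)" "real (Bn (card H) H Hc []) = beta_max H Hc" "Lv H [] = leaves H"
  using len_lt_card[OF wf] unfolding hgt_ok_def Bn_def beta_max_def beta_def Cn_def Lv_def
  by auto

lemma reach_split: "reach Hc Pc lab \<pi> z = pcw Hc Pc z * pl Hc lab \<pi> z 0"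
proof -
  have "reach Hc Pc lab \<pi> z = (\<Prod>k<length z. (if take k z \<in> Hc then Pc (take k z) (z ! k) else 1) * (if take k z \<in> Hc then 1 else \<pi> (lab (take k z)) (z ! k)))"
    unfolding reach_def by (intro prod.cong refl) auto
  also have "\<dots> = pcw Hc Pc z * pl Hc lab \<pi> z 0"
    unfolding pcw_def pl_def prod.distrib atLeast0LessThan ..
  finally show ?thesis .
qed

lemma pcw_nonneg:
  assumes wf: "wf_game H Hc Pc infs" and z: "z \<in> H"
  shows "0 \<le> pcw Hc Pc z"
  unfolding pcw_def
proof (intro prod_nonneg ballI)
  fix k assume "k \<in> {..<length z}"
  then have k: "k < length z" by simp
  show "0 \<le> (if take k z \<in> Hc then Pc (take k z) (z ! k) else 1)"
    using take_acts(2)[OF wf z k] wf unfolding wf_game_def by auto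
qed

lemma pl_nonneg:
  assumes wf: "wf_game H Hc Pc infs" and vs: "valid_strat H Hc lab \<pi>" and z: "z \<in> H"
  shows "0 \<le> pl Hc lab \<pi> z i"
  unfolding pl_def
proof (intro prod_nonneg ballI)
  fix k assume "k \<in> {i..<length z}"
  then have k: "k < length z" by simp
  show "0 \<le> (if take k z \<in> Hc then 1 else \<pi> (lab (take k z)) (z ! k))"
    using take_acts(2)[OF wf z k] take_pnodes[OF wf z k] vs unfolding valid_strat_def by auto
qed

lemma leaves_fin_ne:
  assumes wf: "wf_game H Hc Pc infs"
  shows "finite (leaves H)" "leaves H \<noteq> {}"
proof -
  have fin: "finite H" using wf_finite[OF wf] .
  show "finite (leaves H)" using fin unfolding leaves_def by simp
  have ne: "H \<noteq> {}" using wf_root[OF wf] by auto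
  have "Max (length ` H) \<in> length ` H" using fin ne by (intro Max_in) auto
  then obtain z where z: "z \<in> H" "length z = Max (length ` H)" by (metis imageE)
  have "z \<in> leaves H"
  proof (rule ccontr)
    assume "z \<notin> leaves H"
    then obtain a where "z @ [a] \<in> H" using z unfolding leaves_def acts_def by auto
    then have "length (z @ [a]) \<le> Max (length ` H)" using Max_ge[OF finite_imageI[OF fin]] imageI by blast
    then show False using z by simp
  qed
  then show "leaves H \<noteq> {}" by auto
qed

lemma util_bound:
  assumes wf: "wf_game H Hc Pc infs" and vs: "valid_strat H Hc lab \<pi>" and u: "\<forall>z\<in>leaves H. 0 \<le> u z"
  shows "util H Hc Pc lab u \<pi> \<le> beta_max H Hc * Max ((\<lambda>z. pcw Hc Pc z * u z) ` leaves H)"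
proof -
  let ?M = "Max ((\<lambda>z. pcw Hc Pc z * u z) ` leaves H)"
  note fl = leaves_fin_ne[OF wf]
  have lH: "z \<in> leaves H \<Longrightarrow> z \<in> H" for z unfolding leaves_def by auto
  have wM: "pcw Hc Pc z * u z \<le> ?M" if "z \<in> leaves H" for z using fl that by (intro Max_ge) auto
  obtain z0 where z0: "z0 \<in> leaves H" using fl by auto
  have M0: "0 \<le> ?M" using wM[OF z0] pcw_nonneg[OF wf lH[OF z0]] u z0 by (meson order_trans mult_nonneg_nonneg)
  have "util H Hc Pc lab u \<pi> = (\<Sum>z\<in>leaves H. pl Hc lab \<pi> z 0 * (pcw Hc Pc z * u z))"
    unfolding util_def reach_split by (simp add: ac_simps)
  also have "\<dots> \<le> (\<Sum>z\<in>leaves H. pl Hc lab \<pi> z 0 * ?M)"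
    by (intro sum_mono mult_left_mono wM pl_nonneg[OF wf vs lH])
  also have "\<dots> = (\<Sum>z\<in>leaves H. pl Hc lab \<pi> z 0) * ?M"
    by (rule sum_distrib_right[symmetric])
  also have "\<dots> = ?M * Sx H Hc lab \<pi> []"
    by (simp add: Sx_def root_facts(3)[OF wf] mult.commute)
  also have "\<dots> \<le> ?M * beta_max H Hc"
    using Sx_bound[OF wf vs wf_root[OF wf] root_facts(1)[OF wf]] root_facts(2)[OF wf] M0
    by (simp add: mult_left_mono)
  finally show ?thesis by (simp add: ac_simps)
qed

definition dflt :: "'a list set \<Rightarrow> 'a list set \<Rightarrow> ('a list \<Rightarrow> 'j) \<Rightarrow> 'j \<Rightarrow> 'a \<Rightarrow> real" where
  "dflt H Hc lab I a = (if a = (SOME a. a \<in> acts H (SOME h. h \<in> pnodes H Hc \<and> lab h = I)) then 1 else 0)"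

lemma dflt_sum:
  assumes wf: "wf_game H Hc Pc infs" and lab: "\<forall>h\<in>pnodes H Hc. \<forall>h'\<in>pnodes H Hc. lab h = lab h' \<longrightarrow> acts H h = acts H h'"
    and h: "h \<in> pnodes H Hc"
  shows "(\<Sum>a\<in>acts H h. dflt H Hc lab (lab h) a) = 1" "\<forall>a. 0 \<le> dflt H Hc lab (lab h) a"
proof -
  define h0 where "h0 = (SOME h'. h' \<in> pnodes H Hc \<and> lab h' = lab h)"
  have h0: "h0 \<in> pnodes H Hc \<and> lab h0 = lab h" unfolding h0_def by (rule someI[of _ h]) (use h in auto)
  then have eq: "acts H h0 = acts H h" using lab h by blast
  have "acts H h0 \<noteq> {}" using h0 unfolding pnodes_def by blast
  then obtain b where "b \<in> acts H h0" by blast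
  then have "(SOME a. a \<in> acts H h0) \<in> acts H h0" by (rule someI[of "\<lambda>a. a \<in> acts H h0"])
  then have a0: "(SOME a. a \<in> acts H h0) \<in> acts H h" using eq by simp
  have fin: "finite (acts H h)" using finite_acts wf_finite[OF wf] by blast
  define a0 where "a0 = (SOME a. a \<in> acts H h0)"
  have d: "dflt H Hc lab (lab h) a = (if a = a0 then 1 else 0)" for a
    unfolding dflt_def a0_def h0_def ..
  have "(\<Sum>a\<in>acts H h. dflt H Hc lab (lab h) a) = (\<Sum>a\<in>acts H h. if a = a0 then 1 else 0)"
    unfolding d ..
  also have "\<dots> = 1" using a0 fin unfolding a0_def[symmetric] by (simp add: sum.delta')
  finally show "(\<Sum>a\<in>acts H h. dflt H Hc lab (lab h) a) = 1" .
  show "\<forall>a. 0 \<le> dflt H Hc lab (lab h) a" unfolding dflt_def by simp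
qed

lemma exists_valid:
  assumes wf: "wf_game H Hc Pc infs" and lab: "\<forall>h\<in>pnodes H Hc. \<forall>h'\<in>pnodes H Hc. lab h = lab h' \<longrightarrow> acts H h = acts H h'"
  shows "valid_strat H Hc lab (dflt H Hc lab)"
  using dflt_sum[OF wf lab] unfolding valid_strat_def by auto

lemma infs_lab: "wf_game H Hc Pc infs \<Longrightarrow> \<forall>h\<in>pnodes H Hc. \<forall>h'\<in>pnodes H Hc. infs h = infs h' \<longrightarrow> acts H h = acts H h'"
  unfolding wf_game_def by (elim conjE)

lemma pr_lab: "wf_game H Hc Pc infs \<Longrightarrow> \<forall>h\<in>pnodes H Hc. \<forall>h'\<in>pnodes H Hc. pr_inf H Hc infs h = pr_inf H Hc infs h' \<longrightarrow> acts H h = acts H h'"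
proof (intro ballI impI)
  fix h h' assume wf: "wf_game H Hc Pc infs" and h: "h \<in> pnodes H Hc" "h' \<in> pnodes H Hc"
    and e: "pr_inf H Hc infs h = pr_inf H Hc infs h'"
  then have "infs h = infs h'" unfolding pr_inf_def by simp
  then show "acts H h = acts H h'" using infs_lab[OF wf] h by blast
qed

definition astrat :: "'a list set \<Rightarrow> 'a list set \<Rightarrow> ('a list \<Rightarrow> 'i) \<Rightarrow> 'a list \<Rightarrow> 'i \<Rightarrow> 'a \<Rightarrow> real" where
  "astrat H Hc infs z0 I a = (if 0 < n_I H Hc infs z0 I
     then real (n_a H Hc infs z0 I a) / real (n_I H Hc infs z0 I) else dflt H Hc infs I a)"

definition KK :: "'a list set \<Rightarrow> 'a list set \<Rightarrow> ('a list \<Rightarrow> 'i) \<Rightarrow> 'a list \<Rightarrow> 'i \<Rightarrow> nat set" where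
  "KK H Hc infs z0 I = {k. k < length z0 \<and> take k z0 \<in> pnodes H Hc \<and> infs (take k z0) = I}"

lemma KK_fin: "finite (KK H Hc infs z0 I)"
  unfolding KK_def by (rule finite_subset[of _ "{..<length z0}"]) auto

lemma nI_KK: "n_I H Hc infs z0 I = card (KK H Hc infs z0 I)"
  unfolding n_I_def KK_def ..

lemma na_KK: "n_a H Hc infs z0 I a = card {k \<in> KK H Hc infs z0 I. z0 ! k = a}"
  unfolding n_a_def KK_def by (rule arg_cong[where f=card]) auto

lemma nI_sum:
  assumes wf: "wf_game H Hc Pc infs" and z0: "z0 \<in> H" and h: "h \<in> pnodes H Hc"
    and pos: "0 < n_I H Hc infs z0 (infs h)"
  shows "(\<Sum>a\<in>acts H h. n_a H Hc infs z0 (infs h) a) = n_I H Hc infs z0 (infs h)"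
proof -
  let ?K = "KK H Hc infs z0 (infs h)"
  have "?K \<noteq> {}" using pos nI_KK by (metis card.empty less_irrefl)
  have inK: "z0 ! k \<in> acts H h" if "k \<in> ?K" for k
  proof -
    have k: "k < length z0" "take k z0 \<in> pnodes H Hc" "infs (take k z0) = infs h" using that unfolding KK_def by auto
    have "acts H (take k z0) = acts H h" using infs_lab[OF wf] k h by blast
    then show ?thesis using take_acts(2)[OF wf z0 k(1)] by simp
  qed
  have fin: "finite (acts H h)" using finite_acts wf_finite[OF wf] by blast
  have "(\<Sum>a\<in>acts H h. n_a H Hc infs z0 (infs h) a) = (\<Sum>a\<in>acts H h. \<Sum>k\<in>{k \<in> ?K. z0 ! k = a}. (1::nat))"
    unfolding na_KK by simp
  also have "\<dots> = (\<Sum>k\<in>?K. (1::nat))"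
  proof (rule sum.group[OF KK_fin fin])
    show "(\<lambda>k. z0 ! k) ` ?K \<subseteq> acts H h" using inK by auto
  qed
  also have "\<dots> = n_I H Hc infs z0 (infs h)" unfolding nI_KK by simp
  finally show ?thesis .
qed

lemma astrat_valid:
  assumes wf: "wf_game H Hc Pc infs" and z0: "z0 \<in> H"
  shows "valid_strat H Hc infs (astrat H Hc infs z0)"
  unfolding valid_strat_def
proof (rule ballI, rule conjI)
  fix h assume h: "h \<in> pnodes H Hc"
  note d = dflt_sum[OF wf infs_lab[OF wf] h]
  show "\<forall>a\<in>acts H h. 0 \<le> astrat H Hc infs z0 (infs h) a"
    using d(2) unfolding astrat_def by auto
  show "(\<Sum>a\<in>acts H h. astrat H Hc infs z0 (infs h) a) = 1"
  proof (cases "0 < n_I H Hc infs z0 (infs h)")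
    case True
    have "(\<Sum>a\<in>acts H h. astrat H Hc infs z0 (infs h) a)
        = (\<Sum>a\<in>acts H h. real (n_a H Hc infs z0 (infs h) a)) / real (n_I H Hc infs z0 (infs h))"
      unfolding astrat_def using True by (simp add: sum_divide_distrib)
    also have "\<dots> = 1" using nI_sum[OF wf z0 h True] True
      by (metis of_nat_sum divide_self of_nat_0_less_iff less_irrefl)
    finally show ?thesis .
  next
    case False
    then show ?thesis using d(1) unfolding astrat_def by simp
  qed
qed

lemma A_img: "{z0 ! k |k. k < length z0 \<and> take k z0 \<in> pnodes H Hc \<and> infs (take k z0) = I} = (\<lambda>k. z0 ! k) ` KK H Hc infs z0 I"
  unfolding KK_def by auto

lemma alpha_pos: "0 < alpha H Hc infs z0"
  unfolding alpha_def
proof (intro prod_pos ballI)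
  fix I a
  assume I: "I \<in> {I. (\<exists>k<length z0. take k z0 \<in> pnodes H Hc \<and> infs (take k z0) = I) \<and> 1 < n_I H Hc infs z0 I}"
  assume a: "a \<in> {z0 ! k |k. k < length z0 \<and> take k z0 \<in> pnodes H Hc \<and> infs (take k z0) = I}"
  then obtain k where k: "k \<in> KK H Hc infs z0 I" "a = z0 ! k" unfolding A_img by auto
  have "k \<in> {k \<in> KK H Hc infs z0 I. z0 ! k = a}" using k by auto
  moreover have "finite {k \<in> KK H Hc infs z0 I. z0 ! k = a}" by (rule finite_subset[OF _ KK_fin]) auto
  ultimately have "0 < n_a H Hc infs z0 I a" unfolding na_KK by (metis card_gt_0_iff empty_iff)
  moreover have "0 < n_I H Hc infs z0 I" using I by simp
  ultimately show "0 < (real (n_a H Hc infs z0 I a) / real (n_I H Hc infs z0 I)) ^ n_a H Hc infs z0 I a"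
    by simp
qed

lemma pl_astrat:
  assumes wf: "wf_game H Hc Pc infs" and z0: "z0 \<in> H"
  shows "pl Hc infs (astrat H Hc infs z0) z0 0 = alpha H Hc infs z0"
proof -
  define P where "P = {k. k < length z0 \<and> take k z0 \<in> pnodes H Hc}"
  define Ik where "Ik k = infs (take k z0)" for k
  define g where "g k = real (n_a H Hc infs z0 (Ik k) (z0 ! k)) / real (n_I H Hc infs z0 (Ik k))" for k
  define A where "A I = {z0 ! k |k. k < length z0 \<and> take k z0 \<in> pnodes H Hc \<and> infs (take k z0) = I}" for I
  define F where "F I = (\<Prod>a\<in>A I. (real (n_a H Hc infs z0 I a) / real (n_I H Hc infs z0 I)) ^ n_a H Hc infs z0 I a)" for I
  define J where "J = {I. (\<exists>k<length z0. take k z0 \<in> pnodes H Hc \<and> infs (take k z0) = I) \<and> 1 < n_I H Hc infs z0 I}"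
  have finP: "finite P" unfolding P_def by (rule finite_subset[of _ "{..<length z0}"]) auto
  have KP: "KK H Hc infs z0 I = {k \<in> P. Ik k = I}" for I by (auto simp: KK_def P_def Ik_def)
  have AK: "A I = (\<lambda>k. z0 ! k) ` KK H Hc infs z0 I" for I unfolding A_def by (rule A_img)
  have nIpos: "0 < n_I H Hc infs z0 (Ik k)" if "k \<in> P" for k
  proof -
    have "k \<in> KK H Hc infs z0 (Ik k)" using that KP by auto
    then show ?thesis unfolding nI_KK using KK_fin by (metis card_gt_0_iff empty_iff)
  qed
  have s1: "pl Hc infs (astrat H Hc infs z0) z0 0 = prod g P"
  proof -
    have "pl Hc infs (astrat H Hc infs z0) z0 0 = (\<Prod>k\<in>{0..<length z0}. if k \<in> P then g k else 1)"
      unfolding pl_def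
    proof (intro prod.cong refl)
      fix k assume "k \<in> {0..<length z0}"
      then have k: "k < length z0" by simp
      show "(if take k z0 \<in> Hc then 1 else astrat H Hc infs z0 (infs (take k z0)) (z0 ! k)) = (if k \<in> P then g k else 1)"
      proof (cases "k \<in> P")
        case True
        then have "take k z0 \<notin> Hc" using take_pnodes[OF wf z0 k] unfolding P_def by simp
        then show ?thesis using True nIpos[OF True] unfolding astrat_def g_def Ik_def by simp
      next
        case False
        then have "take k z0 \<in> Hc" using take_pnodes[OF wf z0 k] k unfolding P_def by simp
        then show ?thesis using False by simp
      qed
    qed
    also have "\<dots> = prod g ({0..<length z0} \<inter> P)" by (rule prod.inter_restrict[symmetric]) simp
    also have "{0..<length z0} \<inter> P = P" unfolding P_def by auto
    finally show ?thesis .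
  qed
  have inner: "prod g (KK H Hc infs z0 I) = F I" for I
  proof -
    have finA: "finite (A I)" unfolding AK by (rule finite_imageI[OF KK_fin])
    have "prod g (KK H Hc infs z0 I) = (\<Prod>a\<in>A I. prod g {k \<in> KK H Hc infs z0 I. z0 ! k = a})"
      by (rule prod.group[symmetric, OF KK_fin finA]) (simp add: AK)
    also have "\<dots> = F I" unfolding F_def
    proof (intro prod.cong refl)
      fix a assume "a \<in> A I"
      have "prod g {k \<in> KK H Hc infs z0 I. z0 ! k = a}
          = (\<Prod>k\<in>{k \<in> KK H Hc infs z0 I. z0 ! k = a}. real (n_a H Hc infs z0 I a) / real (n_I H Hc infs z0 I))"
        by (intro prod.cong refl) (auto simp: g_def KP)
      also have "\<dots> = (real (n_a H Hc infs z0 I a) / real (n_I H Hc infs z0 I)) ^ n_a H Hc infs z0 I a"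
        unfolding na_KK by simp
      finally show "prod g {k \<in> KK H Hc infs z0 I. z0 ! k = a} = (real (n_a H Hc infs z0 I a) / real (n_I H Hc infs z0 I)) ^ n_a H Hc infs z0 I a" .
    qed
    finally show ?thesis .
  qed
  have s2: "prod g P = prod F (Ik ` P)"
  proof -
    have "prod g P = (\<Prod>I\<in>Ik ` P. prod g {k \<in> P. Ik k = I})"
      by (rule prod.group[symmetric, OF finP]) (use finP in auto)
    also have "\<dots> = prod F (Ik ` P)"
      by (intro prod.cong refl) (simp add: inner KP[symmetric])
    finally show ?thesis .
  qed
  have s3: "alpha H Hc infs z0 = prod F J" unfolding alpha_def F_def A_def J_def ..
  have s4: "prod F J = prod F (Ik ` P)"
  proof (rule prod.mono_neutral_left)
    show "finite (Ik ` P)" using finP by simp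
    show "J \<subseteq> Ik ` P" unfolding J_def P_def Ik_def by auto
    show "\<forall>I\<in>Ik ` P - J. F I = 1"
    proof
      fix I assume I: "I \<in> Ik ` P - J"
      then obtain k0 where k0: "k0 \<in> P" "I = Ik k0" by auto
      have "I \<notin> J" using I by auto
      moreover have "\<exists>k<length z0. take k z0 \<in> pnodes H Hc \<and> infs (take k z0) = I"
        using k0 unfolding P_def Ik_def by auto
      ultimately have "\<not> 1 < n_I H Hc infs z0 I" unfolding J_def by auto
      moreover have "0 < n_I H Hc infs z0 I" using nIpos[OF k0(1)] k0 by simp
      ultimately have "card (KK H Hc infs z0 I) = 1" unfolding nI_KK by simp
      then obtain k1 where k1: "KK H Hc infs z0 I = {k1}" by (rule card_1_singletonE)
      have "A I = {z0 ! k1}" unfolding AK k1 by simp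
      moreover have "{k \<in> {k1}. z0 ! k = z0 ! k1} = {k1}" by auto
      then have "n_a H Hc infs z0 I (z0 ! k1) = 1" unfolding na_KK k1 by simp
      moreover have "n_I H Hc infs z0 I = 1" unfolding nI_KK k1 by simp
      ultimately show "F I = 1" unfolding F_def by simp
    qed
  qed
  show ?thesis using s1 s2 s3 s4 by simp
qed

theorem theorem2:
  fixes H Hc :: "'a list set" and Pc :: "'a list \<Rightarrow> 'a \<Rightarrow> real" and infs :: "'a list \<Rightarrow> 'i"
  assumes "wf_game H Hc Pc infs"
  shows "(SUP u\<in>{u. \<forall>z\<in>leaves H. 0 \<le> u z}. ereal (VoR_opt H Hc Pc infs u))
           \<le> ereal (VoR_bound H Hc infs)"
proof (rule SUP_least)
  note wf = assms
  fix u :: "'a list \<Rightarrow> real" assume "u \<in> {u. \<forall>z\<in>leaves H. 0 \<le> u z}"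
  then have u: "\<forall>z\<in>leaves H. 0 \<le> u z" by simp
  note fl = leaves_fin_ne[OF wf]
  have lH: "z \<in> leaves H \<Longrightarrow> z \<in> H" for z unfolding leaves_def by auto
  define w where "w = (\<lambda>z. pcw Hc Pc z * u z)"
  define M where "M = Max (w ` leaves H)"
  have "M \<in> w ` leaves H" unfolding M_def using fl by (intro Max_in) auto
  then obtain zs where zs: "zs \<in> leaves H" "w zs = M" by (metis imageE)
  have zsH: "zs \<in> H" using lH[OF zs(1)] .
  have M0: "0 \<le> M" using zs u pcw_nonneg[OF wf zsH] unfolding w_def by (metis mult_nonneg_nonneg)
  define \<pi>s where "\<pi>s = astrat H Hc infs zs"
  have vs: "valid_strat H Hc infs \<pi>s" unfolding \<pi>s_def by (rule astrat_valid[OF wf zsH])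
  have reach_zs: "reach Hc Pc infs \<pi>s zs = pcw Hc Pc zs * alpha H Hc infs zs"
    unfolding reach_split \<pi>s_def pl_astrat[OF wf zsH] ..
  have ap: "0 < alpha H Hc infs zs" by (rule alpha_pos)
  have Us: "alpha H Hc infs zs * M \<le> util H Hc Pc infs u \<pi>s"
  proof -
    have "alpha H Hc infs zs * M = reach Hc Pc infs \<pi>s zs * u zs"
      using zs(2) unfolding reach_zs w_def by (simp add: ac_simps)
    also have "\<dots> \<le> (\<Sum>z\<in>leaves H. reach Hc Pc infs \<pi>s z * u z)"
    proof (rule member_le_sum[OF zs(1) _ fl(1)])
      fix z assume z: "z \<in> leaves H - {zs}"
      then have zH: "z \<in> H" "z \<in> leaves H" using lH by auto
      show "0 \<le> reach Hc Pc infs \<pi>s z * u z"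
        unfolding reach_split
        by (intro mult_nonneg_nonneg pcw_nonneg[OF wf zH(1)] pl_nonneg[OF wf vs zH(1)]) (use u zH(2) in blast)
    qed
    finally show ?thesis unfolding util_def .
  qed
  have bdd: "bdd_above (util H Hc Pc infs u ` {\<pi>. valid_strat H Hc infs \<pi>})"
  proof (rule bdd_aboveI2[where M = "beta_max H Hc * M"])
    fix \<pi> assume "\<pi> \<in> {\<pi>. valid_strat H Hc infs \<pi>}"
    then have "valid_strat H Hc infs \<pi>" by simp
    from util_bound[OF wf this u] show "util H Hc Pc infs u \<pi> \<le> beta_max H Hc * M"
      unfolding M_def w_def .
  qed
  have opt_ge: "alpha H Hc infs zs * M \<le> opt_val H Hc Pc infs u"
  proof -
    have "util H Hc Pc infs u \<pi>s \<le> Sup (util H Hc Pc infs u ` {\<pi>. valid_strat H Hc infs \<pi>})"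
      by (rule cSup_upper[OF _ bdd]) (use vs in blast)
    then show ?thesis unfolding opt_val_def using Us by linarith
  qed
  have optpr: "opt_val H Hc Pc (pr_inf H Hc infs) u \<le> beta_max H Hc * M"
    unfolding opt_val_def
  proof (rule cSup_least)
    show "util H Hc Pc (pr_inf H Hc infs) u ` {\<pi>. valid_strat H Hc (pr_inf H Hc infs) \<pi>} \<noteq> {}"
      using exists_valid[OF wf pr_lab[OF wf]] by blast
    fix x assume "x \<in> util H Hc Pc (pr_inf H Hc infs) u ` {\<pi>. valid_strat H Hc (pr_inf H Hc infs) \<pi>}"
    then obtain \<pi> where "valid_strat H Hc (pr_inf H Hc infs) \<pi>" "x = util H Hc Pc (pr_inf H Hc infs) u \<pi>" by blast
    then show "x \<le> beta_max H Hc * M" using util_bound[OF wf _ u] unfolding M_def w_def by blast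
  qed
  have bm0: "0 \<le> beta_max H Hc" unfolding beta_max_def by simp
  have bnd: "beta_max H Hc / alpha H Hc infs zs \<le> VoR_bound H Hc infs"
    unfolding VoR_bound_def using fl(1) zs(1) by (intro Max_ge) auto
  have b0: "0 \<le> beta_max H Hc / alpha H Hc infs zs" using bm0 ap by simp
  show "ereal (VoR_opt H Hc Pc infs u) \<le> ereal (VoR_bound H Hc infs)"
  proof (cases "opt_val H Hc Pc infs u = 0")
    case True
    then show ?thesis unfolding VoR_opt_def using b0 bnd by simp
  next
    case False
    have opos: "0 < opt_val H Hc Pc infs u" using False opt_ge ap M0
      by (metis order_le_less order_trans mult_nonneg_nonneg)
    have "opt_val H Hc Pc (pr_inf H Hc infs) u \<le> beta_max H Hc / alpha H Hc infs zs * (alpha H Hc infs zs * M)"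
      using optpr ap by simp
    also have "\<dots> \<le> beta_max H Hc / alpha H Hc infs zs * opt_val H Hc Pc infs u"
      using mult_left_mono[OF opt_ge b0] .
    also have "\<dots> \<le> VoR_bound H Hc infs * opt_val H Hc Pc infs u"
      using mult_right_mono[OF bnd less_imp_le[OF opos]] .
    finally have "VoR_opt H Hc Pc infs u \<le> VoR_bound H Hc infs"
      unfolding VoR_opt_def using opos by (simp add: pos_divide_le_eq)
    then show ?thesis by simp
  qed
qed

end
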